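(* Let $G$ be a graph with a pendant vertex $v$ (a vertex of degree one). Then $p(G)=p(G-v)$.
   Context: All graphs are finite and simple. For an acyclic digraph $D$, the phylogeny graph $P(D)$ is the graph on $V(D)$ in which distinct vertices $u,v$ are adjacent if and only if $(u,v)\in A(D)$, or $(v,u)\in A(D)$, or there is a vertex $w$ with $(u,w),(v,w)\in A(D)$. A phylogeny digraph for a graph $G$ is an acyclic digraph $D$ such that $G$ is an induced subgraph of $P(D)$ and $D$ has no arc from a vertex of $V(D)\setminus V(G)$ to a vertex of $V(G)$. The phylogeny number $p(G)$ is the minimum of $|V(D)\setminus V(G)|$ over all phylogeny digraphs $D$ for $G$. *)

theory Defs
  imports Main
begin

definition simple_graph :: "'a set \<Rightarrow> 'a set set \<Rightarrow> bool" where
  "simple_graph V E \<longleftrightarrow> finite V \<and> (\<forall>e\<in>E. \<exists>u v. u \<noteq> v \<and> u \<in> V \<and> v \<in> V \<and> e = {u, v})"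

definition degree :: "'a set set \<Rightarrow> 'a \<Rightarrow> nat" where
  "degree E v = card {u. {u, v} \<in> E}"

definition pendant_vertex :: "'a set \<Rightarrow> 'a set set \<Rightarrow> 'a \<Rightarrow> bool" where
  "pendant_vertex V E v \<longleftrightarrow> v \<in> V \<and> degree E v = 1"

definition del_vertex_V :: "'a set \<Rightarrow> 'a \<Rightarrow> 'a set" where
  "del_vertex_V V v = V - {v}"

definition del_vertex_E :: "'a set set \<Rightarrow> 'a \<Rightarrow> 'a set set" where
  "del_vertex_E E v = {e \<in> E. v \<notin> e}"

definition acyclic_digraph :: "'b set \<Rightarrow> ('b \<times> 'b) set \<Rightarrow> bool" where
  "acyclic_digraph W A \<longleftrightarrow> finite W \<and> A \<subseteq> W \<times> W \<and> acyclic A"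

definition phylo_adj :: "'b set \<Rightarrow> ('b \<times> 'b) set \<Rightarrow> 'b \<Rightarrow> 'b \<Rightarrow> bool" where
  "phylo_adj W A u v \<longleftrightarrow> u \<in> W \<and> v \<in> W \<and> u \<noteq> v \<and>
     ((u, v) \<in> A \<or> (v, u) \<in> A \<or> (\<exists>w \<in> W. (u, w) \<in> A \<and> (v, w) \<in> A))"

text \<open>Phylogeny digraph for G = (V,E). Vertices of D live in type 'a + nat: the vertices
  of G are embedded via Inl, the additional vertices are of the form Inr n.\<close>
definition phylogeny_digraph ::
  "'a set \<Rightarrow> 'a set set \<Rightarrow> ('a + nat) set \<Rightarrow> (('a + nat) \<times> ('a + nat)) set \<Rightarrow> bool" where
  "phylogeny_digraph V E W A \<longleftrightarrow>
     acyclic_digraph W A \<and>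
     W \<inter> range Inl = Inl ` V \<and>
     (\<forall>u\<in>V. \<forall>v\<in>V. u \<noteq> v \<longrightarrow> ({u, v} \<in> E \<longleftrightarrow> phylo_adj W A (Inl u) (Inl v))) \<and>
     (\<forall>x \<in> W - Inl ` V. \<forall>y \<in> Inl ` V. (x, y) \<notin> A)"

definition phylogeny_number :: "'a set \<Rightarrow> 'a set set \<Rightarrow> nat" where
  "phylogeny_number V E =
     (LEAST k. \<exists>W A. phylogeny_digraph V E W A \<and> card (W - Inl ` V) = k)"

end

theory Submission
  imports Defs
begin

lemma dirA:
  assumes pd: "phylogeny_digraph (V - {v}) (del_vertex_E E v) W A"
    and uv: "u \<noteq> v" "u \<in> V" "v \<in> V" "{u,v} \<in> E"
    and nb: "\<And>x. {x,v} \<in> E \<Longrightarrow> x = u"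
  shows "phylogeny_digraph V E (insert (Inl v) W) (insert (Inl u, Inl v) A)
     \<and> insert (Inl v) W - Inl ` V = W - Inl ` (V - {v})"
proof -
  from pd have fin: "finite W" and sub: "A \<subseteq> W \<times> W" and acy: "acyclic A"
    and rng: "W \<inter> range Inl = Inl ` (V - {v})"
    and adj: "\<forall>x\<in>V-{v}. \<forall>y\<in>V-{v}. x \<noteq> y \<longrightarrow> ({x, y} \<in> del_vertex_E E v \<longleftrightarrow> phylo_adj W A (Inl x) (Inl y))"
    and ext: "\<forall>x \<in> W - Inl ` (V-{v}). \<forall>y \<in> Inl ` (V-{v}). (x, y) \<notin> A"
    unfolding phylogeny_digraph_def acyclic_digraph_def by auto
  have vW: "Inl v \<notin> W" using rng by auto
  have uW: "Inl u \<in> W" using rng uv by auto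
  have nodom: "(Inl v, z) \<notin> A" "(z, Inl v) \<notin> A" for z using sub vW by auto
  have "(Inl v, Inl u) \<notin> A\<^sup>*"
  proof
    assume "(Inl v, Inl u) \<in> A\<^sup>*"
    then show False
      by (cases rule: converse_rtranclE) (use nodom uv in auto)
  qed
  hence acy': "acyclic (insert (Inl u, Inl v) A)" using acy by (simp add: acyclic_insert)
  have exteq: "insert (Inl v) W - Inl ` V = W - Inl ` (V - {v})" using vW uv by auto
  let ?W = "insert (Inl v) W" and ?A = "insert (Inl u, Inl v) A"
  have same: "phylo_adj ?W ?A a b = phylo_adj W A a b" if "a \<noteq> Inl v" "b \<noteq> Inl v" for a b
  proof
    assume h: "phylo_adj ?W ?A a b"
    show "phylo_adj W A a b"
    proof (cases "(a, Inl v) \<in> ?A \<and> (b, Inl v) \<in> ?A")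
      case True
      then have "a = Inl u" "b = Inl u" using nodom by auto
      then show ?thesis using h by (simp add: phylo_adj_def)
    next
      case False
      then show ?thesis using h that unfolding phylo_adj_def by auto
    qed
  next
    assume "phylo_adj W A a b"
    then show "phylo_adj ?W ?A a b" unfolding phylo_adj_def by auto
  qed
  have adjv: "phylo_adj ?W ?A (Inl v) (Inl y) \<longleftrightarrow> y = u" if "y \<in> V" "y \<noteq> v" for y
    using that uW nodom uv unfolding phylo_adj_def by auto
  have adjv2: "phylo_adj ?W ?A (Inl y) (Inl v) \<longleftrightarrow> y = u" if "y \<in> V" "y \<noteq> v" for y
    using that uW nodom uv unfolding phylo_adj_def by auto
  have eadj: "{x, y} \<in> E \<longleftrightarrow> phylo_adj ?W ?A (Inl x) (Inl y)"
    if "x \<in> V" "y \<in> V" "x \<noteq> y" for x y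
  proof (cases "x = v")
    case True
    then show ?thesis using adjv[of y] that nb[of y] uv by (auto simp: insert_commute)
  next
    case xv: False
    show ?thesis
    proof (cases "y = v")
      case True
      then show ?thesis using adjv2[of x] that nb[of x] uv by auto
    next
      case False
      have "{x, y} \<in> E \<longleftrightarrow> {x, y} \<in> del_vertex_E E v"
        using xv False by (auto simp: del_vertex_E_def)
      also have "\<dots> \<longleftrightarrow> phylo_adj W A (Inl x) (Inl y)" using adj that xv False by auto
      also have "\<dots> \<longleftrightarrow> phylo_adj ?W ?A (Inl x) (Inl y)" using same xv False by auto
      finally show ?thesis .
    qed
  qed
  have ext': "\<forall>x \<in> ?W - Inl ` V. \<forall>y \<in> Inl ` V. (x, y) \<notin> ?A"
  proof (intro ballI)
    fix x y assume x: "x \<in> ?W - Inl ` V" and y: "y \<in> (Inl ` V :: ('a + nat) set)"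
    have "x \<in> W - Inl ` (V-{v})" using x exteq by blast
    moreover have "x \<noteq> Inl u" using x uv by auto
    ultimately show "(x, y) \<notin> ?A" using ext y nodom by auto
  qed
  have "?W \<inter> range Inl = Inl ` V" using rng uv by auto
  moreover have "acyclic_digraph ?W ?A" unfolding acyclic_digraph_def
    using fin sub acy' uW by auto
  ultimately show ?thesis using eadj ext' exteq unfolding phylogeny_digraph_def by blast
qed

lemma dirB:
  assumes pd: "phylogeny_digraph V E W A"
    and uv: "u \<noteq> v" "u \<in> V" "v \<in> V" "{u,v} \<in> E"
    and nb: "\<And>x. {x,v} \<in> E \<Longrightarrow> x = u"
  shows "phylogeny_digraph (V - {v}) (del_vertex_E E v) (W - {Inl v}) {(a,b)\<in>A. a \<noteq> Inl v \<and> b \<noteq> Inl v}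
     \<and> (W - {Inl v}) - Inl ` (V - {v}) = W - Inl ` V"
proof -
  from pd have fin: "finite W" and sub: "A \<subseteq> W \<times> W" and acy: "acyclic A"
    and rng: "W \<inter> range Inl = Inl ` V"
    and adj: "\<forall>x\<in>V. \<forall>y\<in>V. x \<noteq> y \<longrightarrow> ({x, y} \<in> E \<longleftrightarrow> phylo_adj W A (Inl x) (Inl y))"
    and ext: "\<forall>x \<in> W - Inl ` V. \<forall>y \<in> Inl ` V. (x, y) \<notin> A"
    unfolding phylogeny_digraph_def acyclic_digraph_def by auto
  let ?W = "W - {Inl v}" and ?A = "{(a,b)\<in>A. a \<noteq> Inl v \<and> b \<noteq> Inl v}"
  have exteq: "?W - Inl ` (V - {v}) = W - Inl ` V" using rng uv by auto
  have acy': "acyclic ?A" by (rule acyclic_subset[OF acy]) auto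
  have inv: "x = u" if "x \<in> V" "x \<noteq> v" "(Inl x, Inl v) \<in> A" for x
  proof -
    have "Inl v \<in> W" using rng uv by auto
    moreover have "Inl x \<in> W" using sub that by auto
    ultimately have "phylo_adj W A (Inl x) (Inl v)" using that unfolding phylo_adj_def by auto
    then have "{x, v} \<in> E" using adj that uv by auto
    then show ?thesis by (rule nb)
  qed
  have same: "phylo_adj W A (Inl x) (Inl y) = phylo_adj ?W ?A (Inl x) (Inl y)"
    if "x \<in> V" "y \<in> V" "x \<noteq> v" "y \<noteq> v" "x \<noteq> y" for x y
  proof
    assume h: "phylo_adj W A (Inl x) (Inl y)"
    show "phylo_adj ?W ?A (Inl x) (Inl y)"
    proof (cases "(Inl x, Inl v) \<in> A \<and> (Inl y, Inl v) \<in> A")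
      case True
      then have "x = u" "y = u" using inv that by auto
      then show ?thesis using that by simp
    next
      case False
      then show ?thesis using h that unfolding phylo_adj_def by auto
    qed
  next
    assume "phylo_adj ?W ?A (Inl x) (Inl y)"
    then show "phylo_adj W A (Inl x) (Inl y)" unfolding phylo_adj_def by auto
  qed
  have eadj: "\<forall>x\<in>V-{v}. \<forall>y\<in>V-{v}. x \<noteq> y \<longrightarrow> ({x, y} \<in> del_vertex_E E v \<longleftrightarrow> phylo_adj ?W ?A (Inl x) (Inl y))"
  proof (intro ballI impI)
    fix x y assume x: "x \<in> V-{v}" and y: "y \<in> V-{v}" and xy: "x \<noteq> y"
    have "{x, y} \<in> del_vertex_E E v \<longleftrightarrow> {x, y} \<in> E" using x y by (auto simp: del_vertex_E_def)
    also have "\<dots> \<longleftrightarrow> phylo_adj W A (Inl x) (Inl y)" using adj x y xy by auto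
    also have "\<dots> \<longleftrightarrow> phylo_adj ?W ?A (Inl x) (Inl y)" using same x y xy by auto
    finally show "{x, y} \<in> del_vertex_E E v \<longleftrightarrow> phylo_adj ?W ?A (Inl x) (Inl y)" .
  qed
  have ext': "\<forall>x \<in> ?W - Inl ` (V-{v}). \<forall>y \<in> Inl ` (V-{v}). (x, y) \<notin> ?A"
    using ext exteq by auto
  have "?W \<inter> range Inl = Inl ` (V-{v})" using rng by auto
  moreover have "acyclic_digraph ?W ?A" unfolding acyclic_digraph_def
    using fin sub acy' by auto
  ultimately show ?thesis using eadj ext' exteq unfolding phylogeny_digraph_def by blast
qed

theorem mainTheorem6:
  fixes V :: "'a set" and E :: "'a set set" and v :: 'a
  assumes "simple_graph V E"
    and "pendant_vertex V E v"
  shows "phylogeny_number V E = phylogeny_number (del_vertex_V V v) (del_vertex_E E v)"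
proof -
  have vV: "v \<in> V" and c: "card {u. {u, v} \<in> E} = 1"
    using assms(2) by (auto simp: pendant_vertex_def degree_def)
  then obtain u where u: "{u. {u, v} \<in> E} = {u}" using card_1_singletonE[OF c] by blast
  have uvE: "{u,v} \<in> E" using u by auto
  have nb: "\<And>x. {x,v} \<in> E \<Longrightarrow> x = u" using u by auto
  obtain a b where ab: "a \<noteq> b" "a \<in> V" "b \<in> V" "{u,v} = {a,b}"
    using assms(1) uvE unfolding simple_graph_def by blast
  have uv: "u \<noteq> v" "u \<in> V" using ab by (auto simp: doubleton_eq_iff)
  have "(\<lambda>k. \<exists>W A. phylogeny_digraph V E W A \<and> card (W - Inl ` V) = k) =
        (\<lambda>k. \<exists>W A. phylogeny_digraph (V - {v}) (del_vertex_E E v) W A \<and> card (W - Inl ` (V - {v})) = k)"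
  proof (intro ext iffI)
    fix k assume "\<exists>W A. phylogeny_digraph V E W A \<and> card (W - Inl ` V) = k"
    then obtain W A where "phylogeny_digraph V E W A" "card (W - Inl ` V) = k" by blast
    then show "\<exists>W A. phylogeny_digraph (V - {v}) (del_vertex_E E v) W A \<and> card (W - Inl ` (V - {v})) = k"
      using dirB[OF _ uv vV uvE nb, of W A] by (intro exI) auto
  next
    fix k assume "\<exists>W A. phylogeny_digraph (V - {v}) (del_vertex_E E v) W A \<and> card (W - Inl ` (V - {v})) = k"
    then obtain W A where "phylogeny_digraph (V - {v}) (del_vertex_E E v) W A" "card (W - Inl ` (V - {v})) = k" by blast
    then show "\<exists>W A. phylogeny_digraph V E W A \<and> card (W - Inl ` V) = k"
      using dirA[OF _ uv vV uvE nb, of W A] by (intro exI) auto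
  qed
  then show ?thesis unfolding phylogeny_number_def del_vertex_V_def by simp
qed

end
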